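(* Let $\mathcal{X}$ be a finite nonempty set of types, $n=(n_x)_{x\in\mathcal{X}}$ nonnegative integers, and $\Phi=(\Phi_{xy})_{x,y\in\mathcal{X}}$ a real matrix with $\Phi_{xy}=\Phi_{yx}$. Then $\mathcal{W}_{\mathcal{F}}(n,\Phi)=\mathcal{W}_{\mathcal{B}}(n,n,\Phi/2)$. Moreover, the maximization problem defining $\mathcal{W}_{\mathcal{F}}(n,\Phi)$ has a half-integral optimal solution (all entries in $\frac12\mathbb{N}$).
   Context: Fractional roommate matchings: $\mathcal{F}(n)=\{\mu=(\mu_{xy})_{x,y\in\mathcal{X}}:\ \mu_{xy}\ge0\text{ real},\ \mu_{xy}=\mu_{yx},\ 2\mu_{xx}+\sum_{y\ne x}\mu_{xy}\le n_x\ \forall x\}$, and $\mathcal{W}_{\mathcal{F}}(n,\Phi)=\max_{\mu\in\mathcal{F}(n)}\bigl(\sum_x\mu_{xx}\Phi_{xx}+\sum_{x\ne y}\mu_{xy}\Phi_{xy}/2\bigr)$. Bipartite problem: $\mathcal{B}(n,n)=\{\nu\in\mathbb{N}^{\mathcal{X}\times\mathcal{X}}:\ \sum_y\nu_{xy}\le n_x\ \forall x,\ \sum_x\nu_{xy}\le n_y\ \forall y\}$ and $\mathcal{W}_{\mathcal{B}}(n,n,\Phi/2)=\max_{\nu\in\mathcal{B}(n,n)}\sum_{x,y}\nu_{xy}\Phi_{xy}/2$. *)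

theory Defs
  imports Complex_Main
begin

definition frac_match :: "('x::finite \<Rightarrow> nat) \<Rightarrow> ('x \<Rightarrow> 'x \<Rightarrow> real) set" where
  "frac_match n = {\<mu>. (\<forall>x y. \<mu> x y \<ge> 0) \<and> (\<forall>x y. \<mu> x y = \<mu> y x) \<and>
      (\<forall>x. 2 * \<mu> x x + (\<Sum>y\<in>UNIV - {x}. \<mu> x y) \<le> real (n x))}"

definition frac_obj :: "('x::finite \<Rightarrow> 'x \<Rightarrow> real) \<Rightarrow> ('x \<Rightarrow> 'x \<Rightarrow> real) \<Rightarrow> real" where
  "frac_obj \<Phi> \<mu> = (\<Sum>x\<in>UNIV. \<mu> x x * \<Phi> x x)
      + (\<Sum>p\<in>{(x,y). x \<noteq> y}. \<mu> (fst p) (snd p) * \<Phi> (fst p) (snd p) / 2)"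

definition W_F :: "('x::finite \<Rightarrow> nat) \<Rightarrow> ('x \<Rightarrow> 'x \<Rightarrow> real) \<Rightarrow> real" where
  "W_F n \<Phi> = Sup (frac_obj \<Phi> ` frac_match n)"

definition bip_match :: "('x::finite \<Rightarrow> nat) \<Rightarrow> ('x \<Rightarrow> nat) \<Rightarrow> ('x \<Rightarrow> 'x \<Rightarrow> nat) set" where
  "bip_match n m = {\<nu>. (\<forall>x. (\<Sum>y\<in>UNIV. \<nu> x y) \<le> n x) \<and> (\<forall>y. (\<Sum>x\<in>UNIV. \<nu> x y) \<le> m y)}"

definition W_B :: "('x::finite \<Rightarrow> nat) \<Rightarrow> ('x \<Rightarrow> nat) \<Rightarrow> ('x \<Rightarrow> 'x \<Rightarrow> real) \<Rightarrow> real" where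
  "W_B n m \<Psi> = Max ((\<lambda>\<nu>. \<Sum>p\<in>UNIV. real (\<nu> (fst p) (snd p)) * \<Psi> (fst p) (snd p)) ` bip_match n m)"

definition half_integral :: "('x \<Rightarrow> 'x \<Rightarrow> real) \<Rightarrow> bool" where
  "half_integral \<mu> = (\<forall>x y. \<exists>k::nat. \<mu> x y = real k / 2)"

end

theory Submission
  imports Defs "HOL-Library.FuncSet"
begin


lemma homog:
  fixes a :: "'j \<Rightarrow> 'e \<Rightarrow> real"
  assumes "finite J" "finite E" "card J < card E"
  shows "\<exists>d. (\<forall>e. e \<notin> E \<longrightarrow> d e = 0) \<and> (\<exists>e\<in>E. d e \<noteq> 0) \<and> (\<forall>j\<in>J. (\<Sum>e\<in>E. a j e * d e) = 0)"
  using assms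
proof (induction J arbitrary: E a rule: finite_induct)
  case empty
  then obtain e0 where "e0 \<in> E" by fastforce
  then show ?case by (intro exI[of _ "\<lambda>e. if e = e0 then 1 else 0"]) auto
next
  case (insert j J)
  show ?case
  proof (cases "\<forall>e\<in>E. a j e = 0")
    case True
    have "card J < card E" using insert by simp
    then obtain d where d: "(\<forall>e. e \<notin> E \<longrightarrow> d e = 0)" "(\<exists>e\<in>E. d e \<noteq> 0)" "(\<forall>j\<in>J. (\<Sum>e\<in>E. a j e * d e) = 0)"
      using insert.IH[of E a] insert.prems by blast
    then show ?thesis using True by (intro exI[of _ d]) auto
  next
    case False
    then obtain e0 where e0: "e0 \<in> E" "a j e0 \<noteq> 0" by blast
    define E' where "E' = E - {e0}"
    define a' where "a' = (\<lambda>j' e. a j' e - a j' e0 * a j e / a j e0)"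
    have cE: "card J < card E'" using insert e0 unfolding E'_def by simp
    have fE: "finite E'" using insert unfolding E'_def by simp
    obtain d' where d': "(\<forall>e. e \<notin> E' \<longrightarrow> d' e = 0)" "(\<exists>e\<in>E'. d' e \<noteq> 0)" "(\<forall>j\<in>J. (\<Sum>e\<in>E'. a' j e * d' e) = 0)"
      using insert.IH[OF fE cE, of a'] by blast
    define S where "S = (\<Sum>e\<in>E'. a j e * d' e)"
    define d where "d = (\<lambda>e. if e = e0 then - S / a j e0 else d' e)"
    have split: "(\<Sum>e\<in>E. b e * d e) = b e0 * d e0 + (\<Sum>e\<in>E'. b e * d' e)" for b
    proof -
      have "(\<Sum>e\<in>E. b e * d e) = b e0 * d e0 + (\<Sum>e\<in>E'. b e * d e)"
        unfolding E'_def using e0 insert.prems by (simp add: sum.remove)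
      also have "(\<Sum>e\<in>E'. b e * d e) = (\<Sum>e\<in>E'. b e * d' e)"
        by (rule sum.cong) (auto simp: d_def E'_def)
      finally show ?thesis .
    qed
    have eqj: "(\<Sum>e\<in>E. a j e * d e) = 0"
      unfolding split using e0 by (simp add: d_def S_def)
    have eqJ: "(\<Sum>e\<in>E. a j' e * d e) = 0" if "j' \<in> J" for j'
    proof -
      have "0 = (\<Sum>e\<in>E'. a' j' e * d' e)" using d' that by simp
      also have "\<dots> = (\<Sum>e\<in>E'. a j' e * d' e) - a j' e0 / a j e0 * S"
        unfolding a'_def S_def by (simp add: algebra_simps sum_subtractf sum_distrib_left sum_divide_distrib)
      finally have "(\<Sum>e\<in>E'. a j' e * d' e) = a j' e0 / a j e0 * S" by simp
      then show ?thesis unfolding split using e0 by (simp add: d_def)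
    qed
    show ?thesis
    proof (intro exI[of _ d] conjI)
      show "\<forall>e. e \<notin> E \<longrightarrow> d e = 0" using d' e0 by (auto simp: d_def E'_def)
      show "\<exists>e\<in>E. d e \<noteq> 0" using d' e0 by (auto simp: d_def E'_def)
      show "\<forall>j'\<in>insert j J. (\<Sum>e\<in>E. a j' e * d e) = 0" using eqj eqJ by auto
    qed
  qed
qed

definition inc :: "bool \<times> 'x \<Rightarrow> 'x \<times> 'x \<Rightarrow> bool" where
  "inc l e = (if fst l then fst e = snd l else snd e = snd l)"

definition ls :: "('x \<times> 'x \<Rightarrow> real) \<Rightarrow> bool \<times> 'x \<Rightarrow> real" where
  "ls v l = (\<Sum>e\<in>{e. inc l e}. v e)"


definition feasP :: "(bool \<times> 'x \<Rightarrow> nat) \<Rightarrow> ('x \<times> 'x \<Rightarrow> real) \<Rightarrow> bool" where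
  "feasP cap v = ((\<forall>e. 0 \<le> v e) \<and> (\<forall>l. ls v l \<le> real (cap l)))"

definition objP :: "('x \<times> 'x \<Rightarrow> real) \<Rightarrow> ('x \<times> 'x \<Rightarrow> real) \<Rightarrow> real" where
  "objP w v = (\<Sum>e\<in>UNIV. v e * w e)"

definition meas :: "('x::finite \<times> 'x \<Rightarrow> real) \<Rightarrow> nat" where
  "meas v = card {e. v e \<notin> \<int>} + card {l. ls v l \<notin> \<int>}"

definition stp :: "real \<Rightarrow> real \<Rightarrow> real" where
  "stp x \<delta> = (if \<delta> > 0 then (of_int \<lceil>x\<rceil> - x) / \<delta> else (x - of_int \<lfloor>x\<rfloor>) / (- \<delta>))"

lemma stp_pos: "x \<notin> \<int> \<Longrightarrow> \<delta> \<noteq> 0 \<Longrightarrow> stp x \<delta> > 0"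
proof -
  assume "x \<notin> \<int>" "\<delta> \<noteq> 0"
  then have "of_int \<lfloor>x\<rfloor> < x" "x < of_int \<lceil>x\<rceil>"
    by (metis Ints_of_int floor_le_iff less_eq_real_def of_int_floor_le,
        metis Ints_of_int ceiling_less_iff le_of_int_ceiling less_eq_real_def)
  then show ?thesis using \<open>\<delta> \<noteq> 0\<close> unfolding stp_def
    by (auto simp: divide_pos_neg)
qed

lemma stp_bounds:
  assumes "\<delta> \<noteq> 0" "0 \<le> t" "t \<le> stp x \<delta>"
  shows "of_int \<lfloor>x\<rfloor> \<le> x + t * \<delta>" "x + t * \<delta> \<le> of_int \<lceil>x\<rceil>"
proof -
  have f: "of_int \<lfloor>x\<rfloor> \<le> x" "x \<le> of_int \<lceil>x\<rceil>" by auto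
  show "of_int \<lfloor>x\<rfloor> \<le> x + t * \<delta>"
  proof (cases "\<delta> > 0")
    case True then have "0 \<le> t * \<delta>" using assms by simp
    then show ?thesis using f by linarith
  next
    case False
    then have "-\<delta> > 0" using assms by simp
    moreover have "t \<le> (x - of_int \<lfloor>x\<rfloor>) / (-\<delta>)" using assms False unfolding stp_def by simp
    ultimately have "t * (-\<delta>) \<le> (x - of_int \<lfloor>x\<rfloor>)"
      using pos_le_divide_eq by blast
    then show ?thesis by simp
  qed
  show "x + t * \<delta> \<le> of_int \<lceil>x\<rceil>"
  proof (cases "\<delta> > 0")
    case True
    then have "t * \<delta> \<le> of_int \<lceil>x\<rceil> - x" using assms unfolding stp_def
      by (simp add: pos_le_divide_eq)
    then show ?thesis by simp
  next
    case False then show ?thesis using f assms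
      by (smt (verit, ccfv_SIG) mult_nonneg_nonpos)
  qed
qed

lemma stp_int: "\<delta> \<noteq> 0 \<Longrightarrow> x + stp x \<delta> * \<delta> \<in> \<int>"
  unfolding stp_def by auto

lemma ls_lin: "ls (\<lambda>e. v e + t * d e) l = ls v l + t * ls d l"
  unfolding ls_def by (simp add: sum.distrib sum_distrib_left)

lemma objP_lin: "objP w (\<lambda>e. v e + t * d e) = objP w v + t * objP w d"
  unfolding objP_def by (simp add: sum.distrib sum_distrib_left algebra_simps)


lemma move:
  fixes v d w :: "'x::finite \<times> 'x \<Rightarrow> real"
  assumes feas: "feasP cap v"
  and dF: "\<forall>e. v e \<in> \<int> \<longrightarrow> d e = 0"
  and dnz: "\<exists>e. d e \<noteq> 0"
  and dL: "\<forall>l. ls v l \<in> \<int> \<longrightarrow> ls d l = 0"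
  and dw: "objP w d \<ge> 0"
  shows "\<exists>v'. feasP cap v' \<and> objP w v \<le> objP w v' \<and> meas v' < meas v"
proof -
  define S where "S = (\<lambda>e. stp (v e) (d e)) ` {e. d e \<noteq> 0} \<union> (\<lambda>l. stp (ls v l) (ls d l)) ` {l. ls d l \<noteq> 0}"
  have finS: "finite S" by (simp add: S_def)
  have neS: "S \<noteq> {}" using dnz by (auto simp: S_def)
  define t where "t = Min S"
  have tS: "t \<in> S" using finS neS by (simp add: t_def)
  have tle1: "t \<le> stp (v e) (d e)" if "d e \<noteq> 0" for e using finS that by (auto simp: t_def S_def)
  have tle2: "t \<le> stp (ls v l) (ls d l)" if "ls d l \<noteq> 0" for l using finS that by (auto simp: t_def S_def)
  have tpos: "t > 0"
    using tS dF dL by (auto simp: S_def intro!: stp_pos)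
  define v' where "v' = (\<lambda>e. v e + t * d e)"
  have v0: "\<And>e. 0 \<le> v e" and vl: "\<And>l. ls v l \<le> real (cap l)" using feas unfolding feasP_def by blast+
  have "feasP cap v'"
    unfolding feasP_def
  proof (intro conjI allI)
    fix e
    show "0 \<le> v' e"
    proof (cases "d e = 0")
      case True then show ?thesis using v0 by (simp add: v'_def)
    next
      case False
      have "of_int \<lfloor>v e\<rfloor> \<le> v' e" unfolding v'_def
        using stp_bounds(1)[OF False _ tle1[OF False]] tpos by simp
      moreover have "0 \<le> v e" using v0 by simp
      ultimately show ?thesis by (smt (verit) of_int_floor_le floor_mono floor_of_int of_int_0 of_int_le_iff floor_zero)
    qed
  next
    fix l
    show "ls v' l \<le> real (cap l)"
    proof (cases "ls d l = 0")
      case True then show ?thesis using vl unfolding v'_def ls_lin by simp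
    next
      case False
      have "ls v' l \<le> of_int \<lceil>ls v l\<rceil>" unfolding v'_def ls_lin
        using stp_bounds(2)[OF False _ tle2[OF False]] tpos by simp
      moreover have "ls v l \<le> real (cap l)" using vl by simp
      then have "\<lceil>ls v l\<rceil> \<le> int (cap l)" by (simp add: ceiling_le)
      ultimately show ?thesis by linarith
    qed
  qed
  moreover have "objP w v \<le> objP w v'" unfolding v'_def objP_lin using tpos dw by simp
  moreover have "meas v' < meas v"
  proof -
    let ?A = "{e. v e \<notin> \<int>}" and ?A' = "{e. v' e \<notin> \<int>}"
    let ?B = "{l. ls v l \<notin> \<int>}" and ?B' = "{l. ls v' l \<notin> \<int>}"
    have sA: "?A' \<subseteq> ?A" using dF by (auto simp: v'_def)
    have sB: "?B' \<subseteq> ?B" using dL by (auto simp: v'_def ls_lin)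
    have "?A' \<subset> ?A \<or> ?B' \<subset> ?B"
    proof -
      from tS consider (c) e where "d e \<noteq> 0" "t = stp (v e) (d e)"
        | (l) l where "ls d l \<noteq> 0" "t = stp (ls v l) (ls d l)" by (auto simp: S_def)
      then show ?thesis
      proof cases
        case c
        then have "v' e \<in> \<int>" using stp_int by (simp add: v'_def)
        moreover have "v e \<notin> \<int>" using c dF by blast
        ultimately show ?thesis using sA by blast
      next
        case l
        then have "ls v' l \<in> \<int>" using stp_int by (simp add: v'_def ls_lin)
        moreover have "ls v l \<notin> \<int>" using l dL by blast
        ultimately show ?thesis using sB by blast
      qed
    qed
    then show ?thesis unfolding meas_def using sA sB
      by (metis add_le_less_mono add_less_le_mono card_mono finite psubset_card_mono)
  qed
  ultimately show ?thesis by blast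
qed




lemma ls_alt: "ls (d::'x::finite \<times> 'x \<Rightarrow> real) l = (\<Sum>e\<in>UNIV. if inc l e then d e else 0)"
  unfolding ls_def by (simp add: sum.If_cases Int_def)

lemma ls_rows: "(\<Sum>x\<in>UNIV. ls (d::'x::finite \<times> 'x \<Rightarrow> real) (True, x)) = (\<Sum>e\<in>UNIV. d e)"
proof -
  have "(\<Sum>x\<in>UNIV. ls d (True, x)) = (\<Sum>e\<in>UNIV. \<Sum>x\<in>UNIV. if fst e = x then d e else 0)"
    unfolding ls_alt inc_def by (simp add: sum.swap[of _ UNIV UNIV])
  also have "\<dots> = (\<Sum>e\<in>UNIV. d e)" by simp
  finally show ?thesis .
qed

lemma ls_cols: "(\<Sum>x\<in>UNIV. ls (d::'x::finite \<times> 'x \<Rightarrow> real) (False, x)) = (\<Sum>e\<in>UNIV. d e)"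
proof -
  have "(\<Sum>x\<in>UNIV. ls d (False, x)) = (\<Sum>e\<in>UNIV. \<Sum>x\<in>UNIV. if snd e = x then d e else 0)"
    unfolding ls_alt inc_def by (simp add: sum.swap[of _ UNIV UNIV])
  also have "\<dots> = (\<Sum>e\<in>UNIV. d e)" by simp
  finally show ?thesis .
qed

lemma ls_supp:
  assumes "\<forall>e. e \<notin> F \<longrightarrow> d e = 0"
  shows "ls (d::'x::finite \<times> 'x \<Rightarrow> real) l = (\<Sum>e\<in>F. (if inc l e then 1 else 0) * d e)"
proof -
  have "ls d l = (\<Sum>e\<in>UNIV. (if inc l e then 1 else 0) * d e)" unfolding ls_alt
    by (rule sum.cong) auto
  also have "\<dots> = (\<Sum>e\<in>F. (if inc l e then 1 else 0) * d e)"
    by (rule sum.mono_neutral_right) (use assms in auto)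
  finally show ?thesis .
qed

lemma handshake:
  fixes F :: "('x::finite \<times> 'x) set"
  shows "(\<Sum>l\<in>UNIV. card {e\<in>F. inc l e}) = 2 * card F"
proof -
  have "(\<Sum>l\<in>UNIV. card {e\<in>F. inc l e}) = (\<Sum>l\<in>UNIV. \<Sum>e\<in>F. if inc l e then 1 else (0::nat))"
    by (simp add: sum.inter_filter[symmetric])
  also have "\<dots> = (\<Sum>e\<in>F. \<Sum>l\<in>UNIV. if inc l e then 1 else (0::nat))"
    by (rule sum.swap)
  also have "\<dots> = (\<Sum>e\<in>F. 2)"
  proof (rule sum.cong)
    fix e :: "'x \<times> 'x"
    have "(\<Sum>l\<in>UNIV. if inc l e then 1 else (0::nat)) = card {l. inc l e}"
      by (simp add: sum.If_cases Int_def)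
    also have "{l. inc l e} = {(True, fst e), (False, snd e)}"
      by (auto simp: inc_def split: if_splits)
    finally show "(\<Sum>l\<in>UNIV. if inc l e then 1 else (0::nat)) = 2" by simp
  qed simp
  finally show ?thesis by simp
qed

lemma ls_frac:
  fixes v :: "'x::finite \<times> 'x \<Rightarrow> real"
  shows "ls v l - (\<Sum>e\<in>{e. v e \<notin> \<int> \<and> inc l e}. v e) \<in> \<int>"
proof -
  have "ls v l = (\<Sum>e\<in>{e. inc l e} \<inter> {e. v e \<notin> \<int>}. v e) + (\<Sum>e\<in>{e. inc l e} - {e. v e \<notin> \<int>}. v e)"
    unfolding ls_def using sum.Int_Diff[of "{e. inc l e}" v "{e. v e \<notin> \<int>}"] by simp
  moreover have "{e. inc l e} \<inter> {e. v e \<notin> \<int>} = {e. v e \<notin> \<int> \<and> inc l e}" by auto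
  moreover have "(\<Sum>e\<in>{e. inc l e} - {e. v e \<notin> \<int>}. v e) \<in> \<int>" by (rule Ints_sum) auto
  ultimately show ?thesis by simp
qed

lemma deg0:
  fixes v :: "'x::finite \<times> 'x \<Rightarrow> real"
  assumes "card {e. v e \<notin> \<int> \<and> inc l e} = 0"
  shows "ls v l \<in> \<int>"
proof -
  have "{e. v e \<notin> \<int> \<and> inc l e} = {}" using assms by simp
  then show ?thesis using ls_frac[of v l] by (simp only: sum.empty diff_zero)
qed

lemma deg1:
  fixes v :: "'x::finite \<times> 'x \<Rightarrow> real"
  assumes "card {e. v e \<notin> \<int> \<and> inc l e} = 1"
  shows "ls v l \<notin> \<int>"
proof
  assume h: "ls v l \<in> \<int>"
  obtain e1 where e1: "{e. v e \<notin> \<int> \<and> inc l e} = {e1}" using assms card_1_singletonE by blast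
  then have "v e1 \<notin> \<int>" by auto
  moreover have "ls v l - v e1 \<in> \<int>" using ls_frac[of v l] e1 by simp
  moreover have "v e1 = ls v l - (ls v l - v e1)" by simp
  ultimately show False using h Ints_diff by metis
qed


lemma exists_dir:
  fixes v :: "'x::finite \<times> 'x \<Rightarrow> real"
  assumes ex: "\<exists>e. v e \<notin> \<int>"
  shows "\<exists>d. (\<forall>e. v e \<in> \<int> \<longrightarrow> d e = 0) \<and> (\<exists>e. d e \<noteq> 0) \<and> (\<forall>l. ls v l \<in> \<int> \<longrightarrow> ls d l = 0)"
proof -
  define F where "F = {e. v e \<notin> \<int>}"
  define N where "N = {l. ls v l \<notin> \<int>}"
  define deg where "deg = (\<lambda>l. card {e. v e \<notin> \<int> \<and> inc l e})"
  define J where "J = {l. (\<exists>e\<in>F. inc l e) \<and> ls v l \<in> \<int>}"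
  define a :: "bool \<times> 'x \<Rightarrow> 'x \<times> 'x \<Rightarrow> real" where "a = (\<lambda>l e. if inc l e then 1 else 0)"
  have finF: "finite F" by simp
  have degF: "deg l = card {e\<in>F. inc l e}" for l unfolding deg_def F_def by simp
  have J2: "2 \<le> deg l" if "l \<in> J" for l
  proof -
    have "deg l \<noteq> 0" using that unfolding J_def degF by (auto simp: card_eq_0_iff)
    moreover have "deg l \<noteq> 1" using that deg1[of v l] unfolding J_def deg_def by auto
    ultimately show ?thesis by linarith
  qed
  have N1: "1 \<le> deg l" if "l \<in> N" for l
    using that deg0[of v l] unfolding N_def deg_def by (cases "card {e. v e \<notin> \<int> \<and> inc l e}") auto
  have JN: "J \<inter> N = {}" unfolding J_def N_def by auto
  have count: "2 * card J + card N \<le> 2 * card F"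
  proof -
    have "2 * card J + card N = (\<Sum>l\<in>J. 2) + (\<Sum>l\<in>N. 1)" by simp
    also have "\<dots> \<le> (\<Sum>l\<in>J. deg l) + (\<Sum>l\<in>N. deg l)"
      using J2 N1 by (intro add_mono sum_mono) auto
    also have "\<dots> = (\<Sum>l\<in>J \<union> N. deg l)" using JN by (simp add: sum.union_disjoint)
    also have "\<dots> \<le> (\<Sum>l\<in>UNIV. deg l)" by (rule sum_mono2) auto
    also have "\<dots> = 2 * card F" unfolding degF by (rule handshake)
    finally show ?thesis .
  qed
  have outside: "ls d l = 0" if "\<forall>e. e \<notin> F \<longrightarrow> d e = 0" "\<not> (\<exists>e\<in>F. inc l e)" for d l
    unfolding ls_supp[OF that(1)] using that(2) by (intro sum.neutral) auto
  show ?thesis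
  proof (cases "N = {}")
    case False
    then have "card N > 0" by (simp add: card_gt_0_iff)
    then have "card J < card F" using count by linarith
    then obtain d where d: "\<forall>e. e \<notin> F \<longrightarrow> d e = 0" "\<exists>e\<in>F. d e \<noteq> 0" "\<forall>j\<in>J. (\<Sum>e\<in>F. a j e * d e) = 0"
      using homog[of J F a] by auto
    show ?thesis
    proof (intro exI[of _ d] conjI allI impI)
      show "\<And>e. v e \<in> \<int> \<Longrightarrow> d e = 0" using d(1) unfolding F_def by auto
      show "\<exists>e. d e \<noteq> 0" using d(2) by auto
      fix l assume "ls v l \<in> \<int>"
      show "ls d l = 0"
      proof (cases "\<exists>e\<in>F. inc l e")
        case True
        then have "l \<in> J" unfolding J_def using \<open>ls v l \<in> \<int>\<close> by auto
        then show ?thesis using d(3) unfolding ls_supp[OF d(1)] a_def by auto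
      next
        case False then show ?thesis using outside d(1) by blast
      qed
    qed
  next
    case True
    obtain e0 where e0: "e0 \<in> F" using ex unfolding F_def by auto
    define l0 where "l0 = (True, fst e0)"
    have l0J: "l0 \<in> J" using e0 True unfolding J_def N_def l0_def inc_def by auto
    have "card J \<le> card F" using count by linarith
    then have cJ: "card (J - {l0}) < card F" using l0J
      by (metis card_Diff1_less finite le_less_trans less_le_not_le nat_less_le)
    obtain d :: "'x \<times> 'x \<Rightarrow> real" where d: "\<forall>e. e \<notin> F \<longrightarrow> d e = 0" "\<exists>e\<in>F. d e \<noteq> 0" "\<forall>j\<in>J - {l0}. (\<Sum>e\<in>F. a j e * d e) = 0"
      using homog[OF _ finF cJ, of a] by auto
    have z: "ls d l = 0" if "l \<noteq> l0" for l
    proof (cases "\<exists>e\<in>F. inc l e")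
      case True
      moreover have "ls v l \<in> \<int>" using \<open>N = {}\<close> unfolding N_def by blast
      ultimately have "l \<in> J - {l0}" unfolding J_def using that by blast
      then show ?thesis using d(3) unfolding ls_supp[OF d(1)] a_def by auto
    next
      case False then show ?thesis using outside d(1) by blast
    qed
    have "(\<Sum>y\<in>UNIV. ls d (False, y)) = 0" using z unfolding l0_def by (intro sum.neutral) auto
    then have "(\<Sum>x\<in>UNIV. ls d (True, x)) = 0" unfolding ls_rows ls_cols .
    moreover have "(\<Sum>x\<in>UNIV. ls d (True, x)) = ls d (True, fst e0) + (\<Sum>x\<in>UNIV - {fst e0}. ls d (True, x))"
      by (simp add: sum.remove)
    moreover have "(\<Sum>x\<in>UNIV - {fst e0}. ls d (True, x)) = 0" using z unfolding l0_def by (intro sum.neutral) auto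
    ultimately have "ls d l0 = 0" unfolding l0_def by simp
    then have zz: "ls d l = 0" for l using z by (cases "l = l0") auto
    show ?thesis
    proof (intro exI[of _ d] conjI allI impI)
      show "\<And>e. v e \<in> \<int> \<Longrightarrow> d e = 0" using d(1) unfolding F_def by auto
      show "\<exists>e. d e \<noteq> 0" using d(2) by auto
      show "\<And>l. ls v l \<in> \<int> \<Longrightarrow> ls d l = 0" using zz by auto
    qed
  qed
qed


lemma integral_opt:
  fixes v w :: "'x::finite \<times> 'x \<Rightarrow> real"
  assumes "feasP cap v"
  shows "\<exists>u. feasP cap u \<and> (\<forall>e. u e \<in> \<int>) \<and> objP w v \<le> objP w u"
  using assms
proof (induction "meas v" arbitrary: v rule: less_induct)
  case less
  show ?case
  proof (cases "\<exists>e. v e \<notin> \<int>")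
    case False then show ?thesis using less.prems by blast
  next
    case True
    obtain d where d: "\<forall>e. v e \<in> \<int> \<longrightarrow> d e = 0" "\<exists>e. d e \<noteq> 0" "\<forall>l. ls v l \<in> \<int> \<longrightarrow> ls d l = 0"
      using exists_dir[OF True] by blast
    have "\<exists>d'. (\<forall>e. v e \<in> \<int> \<longrightarrow> d' e = 0) \<and> (\<exists>e. d' e \<noteq> 0) \<and> (\<forall>l. ls v l \<in> \<int> \<longrightarrow> ls d' l = 0) \<and> objP w d' \<ge> 0"
    proof (cases "objP w d \<ge> 0")
      case True then show ?thesis using d by blast
    next
      case False
      have "ls (\<lambda>e. - d e) l = - ls d l" for l unfolding ls_def by (simp add: sum_negf)
      moreover have "objP w (\<lambda>e. - d e) = - objP w d" unfolding objP_def by (simp add: sum_negf)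
      ultimately show ?thesis using d False
        by (intro exI[of _ "\<lambda>e. - d e"]) auto
    qed
    then obtain d' where d': "\<forall>e. v e \<in> \<int> \<longrightarrow> d' e = 0" "\<exists>e. d' e \<noteq> 0" "\<forall>l. ls v l \<in> \<int> \<longrightarrow> ls d' l = 0" "objP w d' \<ge> 0"
      by blast
    obtain v' where v': "feasP cap v'" "objP w v \<le> objP w v'" "meas v' < meas v"
      using move[OF less.prems d'] by blast
    obtain u where "feasP cap u" "\<forall>e. u e \<in> \<int>" "objP w v' \<le> objP w u"
      using less.hyps[OF v'(3) v'(1)] by blast
    then show ?thesis using v'(2) by (intro exI[of _ u]) auto
  qed
qed



lemma ls_row: "ls v (True, x) = (\<Sum>y\<in>UNIV. v (x, y))"
proof -
  have "{e. inc (True, x) e} = Pair x ` UNIV" by (auto simp: inc_def)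
  then show ?thesis unfolding ls_def by (simp add: sum.reindex inj_on_def)
qed

lemma ls_col: "ls v (False, y) = (\<Sum>x\<in>UNIV. v (x, y))"
proof -
  have "{e. inc (False, y) e} = (\<lambda>x. (x, y)) ` UNIV" by (auto simp: inc_def)
  then show ?thesis unfolding ls_def by (simp add: sum.reindex inj_on_def)
qed

lemma split_diag:
  fixes f :: "'x::finite \<times> 'x \<Rightarrow> real"
  shows "(\<Sum>p\<in>UNIV. f p) = (\<Sum>x\<in>UNIV. f (x, x)) + (\<Sum>p\<in>{(x,y). x \<noteq> y}. f p)"
proof -
  have "(\<Sum>p\<in>UNIV. f p) = (\<Sum>p\<in>UNIV \<inter> {p. fst p = snd p}. f p) + (\<Sum>p\<in>UNIV - {p. fst p = snd p}. f p)"
    by (rule sum.Int_Diff) simp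
  moreover have "UNIV \<inter> {p. fst p = snd p} = (\<lambda>x. (x, x)) ` (UNIV :: 'x set)" by auto
  moreover have "UNIV - {p. fst p = snd p} = {(x::'x,y). x \<noteq> y}" by auto
  ultimately show ?thesis by (simp add: sum.reindex inj_on_def)
qed

lemma swap_off:
  fixes f :: "'x::finite \<times> 'x \<Rightarrow> real"
  shows "(\<Sum>p\<in>{(x,y). x \<noteq> y}. f p) = (\<Sum>p\<in>{(x,y). x \<noteq> y}. f (snd p, fst p))"
proof -
  have "prod.swap ` {(x::'x,y). x \<noteq> y} = {(x,y). x \<noteq> y}" by force
  then have "(\<Sum>p\<in>{(x,y). x \<noteq> y}. f p) = (\<Sum>p\<in>prod.swap ` {(x::'x,y). x \<noteq> y}. f p)" by simp
  also have "\<dots> = (\<Sum>p\<in>{(x,y). x \<noteq> y}. f (prod.swap p))" by (simp add: sum.reindex)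
  finally show ?thesis by (simp add: prod.swap_def)
qed

lemma real_nat_floor: "u \<in> \<int> \<Longrightarrow> 0 \<le> u \<Longrightarrow> real (nat \<lfloor>u\<rfloor>) = u"
  by (metis Ints_cases floor_of_int of_int_of_nat_eq of_nat_nat zero_le_floor)


lemma upper:
  fixes n :: "'x::finite \<Rightarrow> nat" and \<Phi> :: "'x \<Rightarrow> 'x \<Rightarrow> real"
  assumes "\<mu> \<in> frac_match n"
  shows "\<exists>\<nu>\<in>bip_match n n. frac_obj \<Phi> \<mu> \<le> (\<Sum>p\<in>UNIV. real (\<nu> (fst p) (snd p)) * (\<Phi> (fst p) (snd p) / 2))"
proof -
  have m0: "\<And>x y. 0 \<le> \<mu> x y" and msym: "\<And>x y. \<mu> x y = \<mu> y x"
    and mcap: "\<And>x. 2 * \<mu> x x + (\<Sum>y\<in>UNIV - {x}. \<mu> x y) \<le> real (n x)"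
    using assms unfolding frac_match_def by auto
  define v where "v = (\<lambda>e::'x \<times> 'x. if fst e = snd e then 2 * \<mu> (fst e) (fst e) else \<mu> (fst e) (snd e))"
  define w where "w = (\<lambda>e::'x \<times> 'x. \<Phi> (fst e) (snd e) / 2)"
  define cap where "cap = (\<lambda>l::bool \<times> 'x. n (snd l))"
  have rowv: "(\<Sum>y\<in>UNIV. v (x, y)) = 2 * \<mu> x x + (\<Sum>y\<in>UNIV - {x}. \<mu> x y)" for x
  proof -
    have "(\<Sum>y\<in>UNIV. v (x, y)) = v (x, x) + (\<Sum>y\<in>UNIV - {x}. v (x, y))" by (simp add: sum.remove)
    also have "(\<Sum>y\<in>UNIV - {x}. v (x, y)) = (\<Sum>y\<in>UNIV - {x}. \<mu> x y)"
      by (rule sum.cong) (auto simp: v_def)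
    finally show ?thesis by (simp add: v_def)
  qed
  have colv: "(\<Sum>x\<in>UNIV. v (x, y)) = 2 * \<mu> y y + (\<Sum>x\<in>UNIV - {y}. \<mu> y x)" for y
  proof -
    have "(\<Sum>x\<in>UNIV. v (x, y)) = v (y, y) + (\<Sum>x\<in>UNIV - {y}. v (x, y))" by (simp add: sum.remove)
    also have "(\<Sum>x\<in>UNIV - {y}. v (x, y)) = (\<Sum>x\<in>UNIV - {y}. \<mu> y x)"
      by (rule sum.cong) (auto simp: v_def msym)
    finally show ?thesis by (simp add: v_def)
  qed
  have feas: "feasP cap v" unfolding feasP_def
  proof (intro conjI allI)
    fix e show "0 \<le> v e" using m0 by (simp add: v_def)
  next
    fix l :: "bool \<times> 'x"
    obtain b z where l: "l = (b, z)" by fastforce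
    show "ls v l \<le> real (cap l)"
      using mcap[of z] unfolding l cap_def by (cases b) (simp_all add: ls_row ls_col rowv colv)
  qed
  have obj: "objP w v = frac_obj \<Phi> \<mu>"
  proof -
    have "objP w v = (\<Sum>x\<in>UNIV. v (x, x) * w (x, x)) + (\<Sum>p\<in>{(x,y). x \<noteq> y}. v p * w p)"
      unfolding objP_def by (rule split_diag)
    also have "(\<Sum>x\<in>UNIV. v (x, x) * w (x, x)) = (\<Sum>x\<in>UNIV. \<mu> x x * \<Phi> x x)"
      by (simp add: v_def w_def)
    also have "(\<Sum>p\<in>{(x,y). x \<noteq> y}. v p * w p) = (\<Sum>p\<in>{(x,y). x \<noteq> y}. \<mu> (fst p) (snd p) * \<Phi> (fst p) (snd p) / 2)"
      by (rule sum.cong) (auto simp: v_def w_def)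
    finally show ?thesis unfolding frac_obj_def by simp
  qed
  obtain u where u: "feasP cap u" "\<forall>e. u e \<in> \<int>" "objP w v \<le> objP w u"
    using integral_opt[OF feas] by blast
  have u0: "\<And>e. 0 \<le> u e" and ucap: "\<And>l. ls u l \<le> real (cap l)" using u(1) unfolding feasP_def by blast+
  define \<nu> where "\<nu> = (\<lambda>x y. nat \<lfloor>u (x, y)\<rfloor>)"
  have rn: "real (\<nu> x y) = u (x, y)" for x y
    unfolding \<nu>_def using u(2) u0 by (simp add: real_nat_floor)
  have "\<nu> \<in> bip_match n n" unfolding bip_match_def
  proof (intro CollectI conjI allI)
    fix x
    have "real (\<Sum>y\<in>UNIV. \<nu> x y) = ls u (True, x)" by (simp add: ls_row rn)
    also have "\<dots> \<le> real (n x)" using ucap[of "(True, x)"] by (simp add: cap_def)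
    finally show "(\<Sum>y\<in>UNIV. \<nu> x y) \<le> n x" by linarith
  next
    fix y
    have "real (\<Sum>x\<in>UNIV. \<nu> x y) = ls u (False, y)" by (simp add: ls_col rn)
    also have "\<dots> \<le> real (n y)" using ucap[of "(False, y)"] by (simp add: cap_def)
    finally show "(\<Sum>x\<in>UNIV. \<nu> x y) \<le> n y" by linarith
  qed
  moreover have "objP w u = (\<Sum>p\<in>UNIV. real (\<nu> (fst p) (snd p)) * (\<Phi> (fst p) (snd p) / 2))"
    unfolding objP_def w_def by (simp add: rn)
  ultimately show ?thesis using obj u(3) by auto
qed


lemma avg_le: "a \<le> c \<Longrightarrow> b \<le> c \<Longrightarrow> (a + b) / 2 \<le> (c::real)" by simp

theorem lemma1:
  fixes n :: "'x::finite \<Rightarrow> nat" and \<Phi> :: "'x \<Rightarrow> 'x \<Rightarrow> real"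
  assumes "\<forall>x y. \<Phi> x y = \<Phi> y x"
  shows "W_F n \<Phi> = W_B n n (\<lambda>x y. \<Phi> x y / 2)
    \<and> (\<exists>\<mu>\<in>frac_match n. half_integral \<mu> \<and> (\<forall>\<mu>'\<in>frac_match n. frac_obj \<Phi> \<mu>' \<le> frac_obj \<Phi> \<mu>))"
proof -
  define g where "g = (\<lambda>\<nu>::'x \<Rightarrow> 'x \<Rightarrow> nat. \<Sum>p\<in>UNIV. real (\<nu> (fst p) (snd p)) * (\<Phi> (fst p) (snd p) / 2))"
  have WB: "W_B n n (\<lambda>x y. \<Phi> x y / 2) = Max (g ` bip_match n n)"
    unfolding W_B_def g_def by simp
  have fin: "finite (bip_match n n)"
  proof (rule finite_subset)
    show "bip_match n n \<subseteq> PiE UNIV (\<lambda>x. PiE UNIV (\<lambda>_. {..n x}))"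
    proof
      fix \<nu> assume h: "\<nu> \<in> bip_match n n"
      have "\<nu> x y \<le> n x" for x y
      proof -
        have "\<nu> x y \<le> (\<Sum>y\<in>UNIV. \<nu> x y)" by (rule member_le_sum) auto
        also have "\<dots> \<le> n x" using h unfolding bip_match_def by auto
        finally show ?thesis .
      qed
      then show "\<nu> \<in> PiE UNIV (\<lambda>x. PiE UNIV (\<lambda>_. {..n x}))" by (auto simp: PiE_iff)
    qed
    show "finite (PiE (UNIV::'x set) (\<lambda>x. PiE (UNIV::'x set) (\<lambda>_. {..n x})))" by (intro finite_PiE) auto
  qed
  have ne: "bip_match n n \<noteq> {}"
  proof -
    have "(\<lambda>x y. 0) \<in> bip_match n n" unfolding bip_match_def by simp
    then show ?thesis by blast
  qed
  obtain \<nu> where \<nu>: "\<nu> \<in> bip_match n n" "g \<nu> = W_B n n (\<lambda>x y. \<Phi> x y / 2)"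
  proof -
    have "Max (g ` bip_match n n) \<in> g ` bip_match n n" using fin ne by (intro Max_in) auto
    then show ?thesis using that unfolding WB by auto
  qed
  have maxB: "g \<nu>' \<le> W_B n n (\<lambda>x y. \<Phi> x y / 2)" if "\<nu>' \<in> bip_match n n" for \<nu>'
    unfolding WB using fin that by (intro Max_ge) auto
  have rowc: "\<And>x. (\<Sum>y\<in>UNIV. \<nu> x y) \<le> n x" and colc: "\<And>y. (\<Sum>x\<in>UNIV. \<nu> x y) \<le> n y"
    using \<nu>(1) unfolding bip_match_def by auto
  define \<mu> where "\<mu> = (\<lambda>x y. if x = y then real (\<nu> x x) / 2 else (real (\<nu> x y) + real (\<nu> y x)) / 2)"
  have muF: "\<mu> \<in> frac_match n" unfolding frac_match_def
  proof (intro CollectI conjI allI)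
    fix x y show "0 \<le> \<mu> x y" by (simp add: \<mu>_def)
    show "\<mu> x y = \<mu> y x" by (simp add: \<mu>_def)
  next
    fix x
    have "(\<Sum>y\<in>UNIV - {x}. \<mu> x y) = (\<Sum>y\<in>UNIV - {x}. (real (\<nu> x y) + real (\<nu> y x)) / 2)"
      by (rule sum.cong) (auto simp: \<mu>_def)
    also have "\<dots> = ((\<Sum>y\<in>UNIV - {x}. real (\<nu> x y)) + (\<Sum>y\<in>UNIV - {x}. real (\<nu> y x))) / 2"
      by (simp only: sum_divide_distrib[symmetric] sum.distrib)
    finally have e1: "2 * \<mu> x x + (\<Sum>y\<in>UNIV - {x}. \<mu> x y) =
       ((real (\<nu> x x) + (\<Sum>y\<in>UNIV - {x}. real (\<nu> x y))) + (real (\<nu> x x) + (\<Sum>y\<in>UNIV - {x}. real (\<nu> y x)))) / 2"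
      by (simp add: \<mu>_def field_simps)
    have h1: "real (\<nu> x x) + (\<Sum>y\<in>UNIV - {x}. real (\<nu> x y)) = real (\<Sum>y\<in>UNIV. \<nu> x y)"
      by (simp add: sum.remove)
    have h2: "real (\<nu> x x) + (\<Sum>y\<in>UNIV - {x}. real (\<nu> y x)) = real (\<Sum>y\<in>UNIV. \<nu> y x)"
      by (simp add: sum.remove)
    have h3: "real (\<Sum>y\<in>UNIV. \<nu> x y) \<le> real (n x)" "real (\<Sum>y\<in>UNIV. \<nu> y x) \<le> real (n x)"
      using rowc[of x] colc[of x] by (simp_all only: of_nat_le_iff)
    note e1
    also have "((real (\<nu> x x) + (\<Sum>y\<in>UNIV - {x}. real (\<nu> x y))) + (real (\<nu> x x) + (\<Sum>y\<in>UNIV - {x}. real (\<nu> y x)))) / 2 \<le> real (n x)"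
      unfolding h1 h2 using h3 by (rule avg_le)
    finally show "2 * \<mu> x x + (\<Sum>y\<in>UNIV - {x}. \<mu> x y) \<le> real (n x)" .
  qed
  have muH: "half_integral \<mu>" unfolding half_integral_def
  proof (intro allI)
    fix x y
    show "\<exists>k::nat. \<mu> x y = real k / 2"
    proof (cases "x = y")
      case True then show ?thesis by (intro exI[of _ "\<nu> x x"]) (simp add: \<mu>_def)
    next
      case False then show ?thesis by (intro exI[of _ "\<nu> x y + \<nu> y x"]) (simp add: \<mu>_def)
    qed
  qed
  have muO: "frac_obj \<Phi> \<mu> = g \<nu>"
  proof -
    let ?O = "{(x::'x,y). x \<noteq> y}"
    have "g \<nu> = (\<Sum>x\<in>UNIV. real (\<nu> x x) * (\<Phi> x x / 2)) + (\<Sum>p\<in>?O. real (\<nu> (fst p) (snd p)) * (\<Phi> (fst p) (snd p) / 2))"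
      unfolding g_def by (subst split_diag) simp
    moreover have "(\<Sum>p\<in>?O. \<mu> (fst p) (snd p) * \<Phi> (fst p) (snd p) / 2) =
       (\<Sum>p\<in>?O. real (\<nu> (fst p) (snd p)) * \<Phi> (fst p) (snd p) / 4) + (\<Sum>p\<in>?O. real (\<nu> (snd p) (fst p)) * \<Phi> (fst p) (snd p) / 4)"
      by (subst sum.distrib[symmetric], rule sum.cong) (auto simp: \<mu>_def field_simps)
    moreover have "(\<Sum>p\<in>?O. real (\<nu> (snd p) (fst p)) * \<Phi> (fst p) (snd p) / 4) = (\<Sum>p\<in>?O. real (\<nu> (fst p) (snd p)) * \<Phi> (fst p) (snd p) / 4)"
      using swap_off[of "\<lambda>p. real (\<nu> (snd p) (fst p)) * \<Phi> (fst p) (snd p) / 4"] assms by simp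
    moreover have "(\<Sum>p\<in>?O. real (\<nu> (fst p) (snd p)) * (\<Phi> (fst p) (snd p) / 2)) =
       (\<Sum>p\<in>?O. real (\<nu> (fst p) (snd p)) * \<Phi> (fst p) (snd p) / 4) + (\<Sum>p\<in>?O. real (\<nu> (fst p) (snd p)) * \<Phi> (fst p) (snd p) / 4)"
      by (subst sum.distrib[symmetric], rule sum.cong) auto
    moreover have "(\<Sum>x\<in>UNIV. \<mu> x x * \<Phi> x x) = (\<Sum>x\<in>UNIV. real (\<nu> x x) * (\<Phi> x x / 2))"
      by (simp add: \<mu>_def)
    ultimately show ?thesis unfolding frac_obj_def by simp
  qed
  have ub: "frac_obj \<Phi> \<mu>' \<le> frac_obj \<Phi> \<mu>" if mu': "\<mu>' \<in> frac_match n" for \<mu>'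
  proof -
    obtain \<nu>' where "\<nu>' \<in> bip_match n n" "frac_obj \<Phi> \<mu>' \<le> g \<nu>'"
      using upper[OF mu', of \<Phi>] unfolding g_def by blast
    then show ?thesis using maxB muO \<nu>(2) by fastforce
  qed
  have "W_F n \<Phi> = frac_obj \<Phi> \<mu>" unfolding W_F_def
    by (rule cSup_eq_maximum) (use muF ub in auto)
  then have "W_F n \<Phi> = W_B n n (\<lambda>x y. \<Phi> x y / 2)" using muO \<nu>(2) by simp
  then show ?thesis using muF muH ub by blast
qed
end
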